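(* Let $\lambda\in\mathbb{R}$, let $$J_6=\begin{pmatrix}\lambda&1&0\\0&\lambda&1\\0&0&\lambda\end{pmatrix},$$ and $h>0$ with $\lambda h+2\neq 0$. Set $$\psi=\frac{e^{\lambda h}(2-\lambda h)}{\lambda h+2},\qquad \phi=\frac{h(e^{\lambda h}+1)}{\lambda h+2},\qquad \theta=\frac{1}{e^{\lambda h}+1}.$$ Then the difference scheme $$\frac{\mathbf{x}_{k+1}-\psi\mathbf{x}_k}{\phi}=J_6\big[\theta\mathbf{x}_{k+1}+(1-\theta)\mathbf{x}_k\big]$$ is exact for the system $\mathbf{x}'=J_6\mathbf{x}$.
   Context: A one-step difference scheme with step size $h>0$ for $\mathbf{x}'=M\mathbf{x}$ is called exact if for every initial vector $\mathbf{x}_0$ the sequence $(\mathbf{x}_k)$ it generates satisfies $\mathbf{x}_k=\mathbf{x}(kh)$ for all $k\ge 0$, where $\mathbf{x}(t)$ solves $\mathbf{x}'=M\mathbf{x}$, $\mathbf{x}(0)=\mathbf{x}_0$. *)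

theory Defs
  imports "HOL-Analysis.Analysis"
begin

text \<open>A one-step scheme is given by a relation step x_k x_{k+1}.\<close>

definition exact_scheme ::
  "real \<Rightarrow> (real^'n \<Rightarrow> real^'n \<Rightarrow> bool) \<Rightarrow> real^'n^'n \<Rightarrow> bool" where
  "exact_scheme h step M \<longleftrightarrow>
     (\<forall>x. \<exists>!y. step x y) \<and>
     (\<forall>x0 (xs :: nat \<Rightarrow> real^'n) (x :: real \<Rightarrow> real^'n).
        xs 0 = x0 \<and> (\<forall>k. step (xs k) (xs (Suc k))) \<and>
        x 0 = x0 \<and> (\<forall>t\<ge>0. (x has_vector_derivative (M *v x t)) (at t within {0..}))
        \<longrightarrow> (\<forall>k. xs k = x (real k * h)))"

definition J6 :: "real \<Rightarrow> real^3^3" where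
  "J6 lam = vector [vector [lam, 1, 0], vector [0, lam, 1], vector [0, 0, lam]]"

definition psi_c :: "real \<Rightarrow> real \<Rightarrow> real" where
  "psi_c lam h = exp (lam * h) * (2 - lam * h) / (lam * h + 2)"

definition phi_c :: "real \<Rightarrow> real \<Rightarrow> real" where
  "phi_c lam h = h * (exp (lam * h) + 1) / (lam * h + 2)"

definition theta_c :: "real \<Rightarrow> real \<Rightarrow> real" where
  "theta_c lam h = 1 / (exp (lam * h) + 1)"

end

theory Submission
  imports Defs
begin

lemma J6_mult:
  "(J6 lam *v v) $ 1 = lam * v$1 + v$2"
  "(J6 lam *v v) $ 2 = lam * v$2 + v$3"
  "(J6 lam *v v) $ 3 = lam * v$3"
  by (simp_all add: J6_def matrix_vector_mult_def sum_3)

lemma comp_deriv: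
  assumes "(x has_vector_derivative v) F"
  shows "((\<lambda>t. x t $ i) has_real_derivative v $ i) F"
  using bounded_linear.has_vector_derivative[OF bounded_linear_vec_nth assms, of i]
  by (simp add: has_real_derivative_iff_has_vector_derivative)

lemma const_on:
  assumes "\<And>t. t \<ge> 0 \<Longrightarrow> ((f::real\<Rightarrow>real) has_real_derivative 0) (at t within {0..})"
  shows "\<And>t. t \<ge> 0 \<Longrightarrow> f t = f 0"
proof -
  obtain c where "\<forall>t\<in>{0..}. f t = c"
    using has_field_derivative_zero_constant[of "{0::real..}" f] assms by auto
  then show "\<And>t. t \<ge> 0 \<Longrightarrow> f t = f 0" by auto
qed

lemma ode_sol:
  fixes x :: "real \<Rightarrow> real^3"
  assumes d: "\<forall>t\<ge>0. (x has_vector_derivative (J6 lam *v x t)) (at t within {0..})"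
  and t: "t \<ge> 0"
  shows "x t $ 3 = exp (lam * t) * x 0 $ 3"
    "x t $ 2 = exp (lam * t) * (x 0 $ 2 + t * x 0 $ 3)"
    "x t $ 1 = exp (lam * t) * (x 0 $ 1 + t * x 0 $ 2 + t^2/2 * x 0 $ 3)"
proof -
  have D: "\<And>i s. s \<ge> 0 \<Longrightarrow> ((\<lambda>t. x t $ i) has_real_derivative (J6 lam *v x s) $ i) (at s within {0..})"
    using d comp_deriv by blast
  have E: "\<And>s. ((\<lambda>t. exp (- lam * t)) has_real_derivative (- lam * exp (- lam * s))) (at s within {0..})"
    by (auto intro!: derivative_eq_intros)
  let ?c = "\<lambda>t. exp (- lam * t) * x t $ 3"
  have c: "\<And>s. s \<ge> 0 \<Longrightarrow> ?c s = ?c 0"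
  proof (rule const_on)
    fix s :: real assume "s \<ge> 0"
    from DERIV_mult[OF E D[OF this, of 3]]
    show "(?c has_real_derivative 0) (at s within {0..})"
      by (simp add: J6_mult algebra_simps)
  qed
  have c3: "\<And>s. s \<ge> 0 \<Longrightarrow> x s $ 3 = exp (lam * s) * x 0 $ 3"
  proof -
    fix s :: real assume "s \<ge> 0"
    from c[OF this] have "exp (lam * s) * ?c s = exp (lam * s) * x 0 $ 3" by simp
    then show "x s $ 3 = exp (lam * s) * x 0 $ 3"
      by (simp add: exp_minus field_simps)
  qed
  let ?b = "\<lambda>t. exp (- lam * t) * x t $ 2 - t * x 0 $ 3"
  have b: "\<And>s. s \<ge> 0 \<Longrightarrow> ?b s = ?b 0"
  proof (rule const_on)
    fix s :: real assume s: "s \<ge> 0"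
    have "((\<lambda>t. t * x 0 $ 3) has_real_derivative x 0 $ 3) (at s within {0..})"
      by (auto intro!: derivative_eq_intros)
    from DERIV_diff[OF DERIV_mult[OF E D[OF s, of 2]] this]
    show "(?b has_real_derivative 0) (at s within {0..})"
      using c3[OF s]
      by (simp add: J6_mult exp_minus field_simps)
  qed
  have b2: "\<And>s. s \<ge> 0 \<Longrightarrow> x s $ 2 = exp (lam * s) * (x 0 $ 2 + s * x 0 $ 3)"
  proof -
    fix s :: real assume "s \<ge> 0"
    from b[OF this] have "exp (lam * s) * (?b s + s * x 0 $ 3) = exp (lam * s) * (x 0 $ 2 + s * x 0 $ 3)" by simp
    then show "x s $ 2 = exp (lam * s) * (x 0 $ 2 + s * x 0 $ 3)"
      by (simp add: exp_minus field_simps)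
  qed
  let ?a = "\<lambda>t. exp (- lam * t) * x t $ 1 - t * x 0 $ 2 - t^2/2 * x 0 $ 3"
  have a: "\<And>s. s \<ge> 0 \<Longrightarrow> ?a s = ?a 0"
  proof (rule const_on)
    fix s :: real assume s: "s \<ge> 0"
    have "((\<lambda>t. t * x 0 $ 2) has_real_derivative x 0 $ 2) (at s within {0..})"
      by (auto intro!: derivative_eq_intros)
    moreover have "((\<lambda>t. t^2/2 * x 0 $ 3) has_real_derivative s * x 0 $ 3) (at s within {0..})"
      by (auto intro!: derivative_eq_intros)
    ultimately have "(?a has_real_derivative
        (- lam * exp (- lam * s) * x s $ 1 + (J6 lam *v x s) $ 1 * exp (- lam * s) - x 0 $ 2 - s * x 0 $ 3)) (at s within {0..})"
      using DERIV_mult[OF E D[OF s, of 1]] by (intro DERIV_diff) (auto simp: mult.commute)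
    then show "(?a has_real_derivative 0) (at s within {0..})"
      using b2[OF s]
      by (simp add: J6_mult exp_minus field_simps)
  qed
  show "x t $ 3 = exp (lam * t) * x 0 $ 3" using c3 t .
  show "x t $ 2 = exp (lam * t) * (x 0 $ 2 + t * x 0 $ 3)" using b2 t .
  from a[OF t] have "exp (lam * t) * (?a t + t * x 0 $ 2 + t^2/2 * x 0 $ 3) =
     exp (lam * t) * (x 0 $ 1 + t * x 0 $ 2 + t^2/2 * x 0 $ 3)" by simp
  then show "x t $ 1 = exp (lam * t) * (x 0 $ 1 + t * x 0 $ 2 + t^2/2 * x 0 $ 3)"
    by (simp add: exp_minus field_simps)
qed

lemma key_gen:
  fixes lam h v u a b E :: real
  assumes "h > 0" "lam * h + 2 \<noteq> 0" "E > 0"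
  shows "h * (E + 1) * ((1 / (h * (E + 1) / (lam * h + 2))) * (v - (E * (2 - lam * h) / (lam * h + 2)) * u) -
     (lam * ((1 / (E + 1)) * v + (1 - (1 / (E + 1))) * u) + ((1 / (E + 1)) * a + (1 - (1 / (E + 1))) * b)))
   = 2 * v - 2 * E * u - h * a - h * E * b"
proof -
  have e: "E + 1 \<noteq> 0" using assms by linarith
  have hz: "h * (E + 1) \<noteq> 0" using assms e by simp
  have h1: "h * (E + 1) * (1 / (h * (E + 1) / (lam * h + 2))) = lam * h + 2"
    using hz by simp
  have h2: "(lam * h + 2) * (E * (2 - lam * h) / (lam * h + 2)) = E * (2 - lam * h)"
    using assms by simp
  have h3: "(E + 1) * (1 / (E + 1)) = 1" using e by simp
  show ?thesis using h1 h2 h3 by algebra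
qed

lemma key_id:
  fixes lam h v u a b :: real
  assumes "h > 0" "lam * h + 2 \<noteq> 0"
  shows "h * (exp (lam * h) + 1) * ((1 / phi_c lam h) * (v - psi_c lam h * u) -
     (lam * (theta_c lam h * v + (1 - theta_c lam h) * u) + (theta_c lam h * a + (1 - theta_c lam h) * b)))
   = 2 * v - 2 * exp (lam * h) * u - h * a - h * exp (lam * h) * b"
  unfolding phi_c_def psi_c_def theta_c_def
  using key_gen[OF assms, of "exp (lam * h)"] by simp

lemma phi_nz: "h > 0 \<Longrightarrow> lam * h + 2 \<noteq> 0 \<Longrightarrow> 1 / (phi_c lam h * (lam * h + 2)) \<noteq> 0"
proof -
  assume "h > 0" "lam * h + 2 \<noteq> 0"
  moreover have "exp (lam * h) + 1 > 0" by (simp add: add_pos_pos)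
  ultimately show ?thesis unfolding phi_c_def by simp
qed

definition Sm :: "real \<Rightarrow> real \<Rightarrow> real^3 \<Rightarrow> real^3" where
  "Sm lam h u = vector [exp (lam * h) * (u$1 + h * u$2 + h^2/2 * u$3),
                        exp (lam * h) * (u$2 + h * u$3), exp (lam * h) * u$3]"

lemma step_iff:
  fixes lam h :: real and u v :: "real^3"
  assumes h: "h > 0" and z: "lam * h + 2 \<noteq> 0"
  shows "((1 / phi_c lam h) *\<^sub>R (v - psi_c lam h *\<^sub>R u) =
               J6 lam *v (theta_c lam h *\<^sub>R v + (1 - theta_c lam h) *\<^sub>R u)) \<longleftrightarrow> v = Sm lam h u"
proof -
  define K where "K = h * (exp (lam * h) + 1)"
  have "exp (lam * h) + 1 > 0" by (simp add: add_pos_pos)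
  then have K: "K \<noteq> 0" unfolding K_def using h by simp
  define E where "E = exp (lam * h)"
  have kid: "\<And>v u a b. (1 / phi_c lam h) * (v - psi_c lam h * u) =
     (lam * (theta_c lam h * v + (1 - theta_c lam h) * u) + (theta_c lam h * a + (1 - theta_c lam h) * b))
    \<longleftrightarrow> 2 * v - 2 * E * u - h * a - h * E * b = 0"
  proof -
    fix v u a b :: real
    have "K * ((1 / phi_c lam h) * (v - psi_c lam h * u) -
     (lam * (theta_c lam h * v + (1 - theta_c lam h) * u) + (theta_c lam h * a + (1 - theta_c lam h) * b)))
      = 2 * v - 2 * E * u - h * a - h * E * b"
      using key_id[OF h z] unfolding K_def E_def .
    then show "?thesis v u a b" using K
      by (metis (no_types, lifting) eq_iff_diff_eq_0 mult_eq_0_iff)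
  qed
  have kid3: "\<And>v u. (1 / phi_c lam h) * (v - psi_c lam h * u) =
     lam * (theta_c lam h * v + (1 - theta_c lam h) * u)
    \<longleftrightarrow> v = E * u"
    using kid[where a=0 and b=0] by auto
  have "((1 / phi_c lam h) *\<^sub>R (v - psi_c lam h *\<^sub>R u) =
               J6 lam *v (theta_c lam h *\<^sub>R v + (1 - theta_c lam h) *\<^sub>R u)) \<longleftrightarrow>
      (1 / phi_c lam h) * (v$1 - psi_c lam h * u$1) =
     (lam * (theta_c lam h * v$1 + (1 - theta_c lam h) * u$1) + (theta_c lam h * v$2 + (1 - theta_c lam h) * u$2))
    \<and> (1 / phi_c lam h) * (v$2 - psi_c lam h * u$2) =
     (lam * (theta_c lam h * v$2 + (1 - theta_c lam h) * u$2) + (theta_c lam h * v$3 + (1 - theta_c lam h) * u$3))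
    \<and> (1 / phi_c lam h) * (v$3 - psi_c lam h * u$3) =
     lam * (theta_c lam h * v$3 + (1 - theta_c lam h) * u$3)"
    by (simp add: vec_eq_iff forall_3 J6_mult del: vector_3)
  also have "\<dots> \<longleftrightarrow> v = Sm lam h u"
    unfolding kid kid3
    apply (simp add: vec_eq_iff forall_3 Sm_def E_def[symmetric] power2_eq_square)
    apply (auto simp: algebra_simps)
    apply (subgoal_tac "v$2 = E*u$2 + E*(h*u$3)")
     apply (simp add: algebra_simps)
    apply linarith
    done
  finally show ?thesis .
qed

theorem theorem10:
  fixes lam h :: real
  assumes "h > 0" and "lam * h + 2 \<noteq> 0"
  shows "exact_scheme h
           (\<lambda>xk xk1. (1 / phi_c lam h) *\<^sub>R (xk1 - psi_c lam h *\<^sub>R xk) =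
               J6 lam *v (theta_c lam h *\<^sub>R xk1 + (1 - theta_c lam h) *\<^sub>R xk))
           (J6 lam)"
  unfolding exact_scheme_def step_iff[OF assms]
proof (intro conjI allI impI)
  fix u :: "real^3" show "\<exists>!y. y = Sm lam h u" by simp
next
  fix x0 xs and x :: "real \<Rightarrow> real^3" and k :: nat
  assume A: "xs 0 = x0 \<and> (\<forall>k. xs (Suc k) = Sm lam h (xs k)) \<and> x 0 = x0 \<and>
    (\<forall>t\<ge>0. (x has_vector_derivative J6 lam *v x t) (at t within {0..}))"
  then have d: "\<forall>t\<ge>0. (x has_vector_derivative J6 lam *v x t) (at t within {0..})" by blast
  show "xs k = x (real k * h)"
  proof (induction k)
    case 0 then show ?case using A by simp
  next
    case (Suc k)
    have t0: "real k * h \<ge> 0" "real (Suc k) * h \<ge> 0" using assms by auto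
    have ex: "exp (lam * (real (Suc k) * h)) = exp (lam * h) * exp (lam * (real k * h))"
      by (simp add: exp_add[symmetric] algebra_simps)
    have "xs (Suc k) = Sm lam h (x (real k * h))" using A Suc by simp
    also have "\<dots> = x (real (Suc k) * h)"
      using ode_sol[OF d t0(1)] ode_sol[OF d t0(2)]
      apply (simp add: vec_eq_iff forall_3 Sm_def ex del: of_nat_Suc)
      apply (simp add: power2_eq_square algebra_simps)
      done
    finally show ?case .
  qed
qed

end
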